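(* Let $A=\{(x_k,y_k):k\in[\ell]\}\subset\mathbb N^d$ be finite, $d=m+n$. Then for all $\bar k\in[\ell]$: (a) $\mathbb D_{\mathrm{in}}(x_{\bar k},y_{\bar k},T_{\mathbb Q_{-\infty},V}(A))=\mathbb D_{\mathrm{in}}(x_{\bar k},y_{\bar k},Z_{\mathbb Q_{-\infty},V}(A))$; (b) $\mathbb D_{\mathrm{in}}(x_{\bar k},y_{\bar k},T_{\mathbb Q_{-\infty},C}(A))=\mathbb D_{\mathrm{in}}(x_{\bar k},y_{\bar k},Z_{\mathbb Q_{-\infty},C}(A))$; (c) $\mathbb D_{\mathrm{out}}(x_{\bar k},y_{\bar k},T_{\mathbb Q_{-\infty},V}(A))=\mathbb D_{\mathrm{out}}(x_{\bar k},y_{\bar k},Z_{\mathbb Q_{-\infty},V}(A))$; (d) $\mathbb D_{\mathrm{out}}(x_{\bar k},y_{\bar k},T_{\mathbb Q_{-\infty},C}(A))=\mathbb D_{\mathrm{out}}(x_{\bar k},y_{\bar k},Z_{\mathbb Q_{-\infty},C}(A))$.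
   Context: $\mathbb N$ is the set of non-negative integers; $[\ell]=\{1,\dots,\ell\}$; $1\!\!1$ denotes a vector of ones; $\wedge$ is componentwise min. Min-Plus technologies: $T_{\mathbb Q_{-\infty},V}(A)=\{(x,y)\in\mathbb{R}_+^d: x\ge\bigwedge_k(t_k1\!\!1_m+x_k),\ y\le\bigwedge_k(t_k1\!\!1_n+y_k),\ \min_k t_k=0,\ t\in(\mathbb{R}\cup\{+\infty\})^\ell\}$, and $T_{\mathbb Q_{-\infty},C}(A)$ is the same without the constraint $\min_k t_k=0$. Discrete versions: $Z_{\mathbb Q_{-\infty},V}(A)=T_{\mathbb Q_{-\infty},V}(A)\cap\mathbb N^d$, $Z_{\mathbb Q_{-\infty},C}(A)=T_{\mathbb Q_{-\infty},C}(A)\cap\mathbb N^d$. Translation distance functions: $\mathbb D_{\mathrm{in}}(x,y,T)=\sup\{\delta\in\mathbb{R}:(x-\delta1\!\!1_m,y)\in T\}$, $\mathbb D_{\mathrm{out}}(x,y,T)=\sup\{\delta\in\mathbb{R}:(x,y+\delta1\!\!1_n)\in T\}$. *)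

theory Defs
  imports "HOL-Analysis.Analysis" "HOL-Library.Extended_Real"
begin

text \<open>Data: the finite set A = {(X k, Y k) : k in {1..l}}, inputs in real^'m,
 outputs in real^'n (d = m + n). Intensities t k in R union {+inf}, modelled as
 extended reals different from -inf.\<close>

definition TV :: "nat \<Rightarrow> (nat \<Rightarrow> real^'m) \<Rightarrow> (nat \<Rightarrow> real^'n) \<Rightarrow> ((real^'m) \<times> (real^'n)) set" where
  "TV l X Y = {(x, y). (\<forall>i. 0 \<le> x $ i) \<and> (\<forall>j. 0 \<le> y $ j) \<and>
     (\<exists>t :: nat \<Rightarrow> ereal. (\<forall>k\<in>{1..l}. t k \<noteq> -\<infinity>) \<and>
        (\<forall>i. (MIN k\<in>{1..l}. t k + ereal (X k $ i)) \<le> ereal (x $ i)) \<and>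
        (\<forall>j. ereal (y $ j) \<le> (MIN k\<in>{1..l}. t k + ereal (Y k $ j))) \<and>
        (MIN k\<in>{1..l}. t k) = 0)}"

definition TC :: "nat \<Rightarrow> (nat \<Rightarrow> real^'m) \<Rightarrow> (nat \<Rightarrow> real^'n) \<Rightarrow> ((real^'m) \<times> (real^'n)) set" where
  "TC l X Y = {(x, y). (\<forall>i. 0 \<le> x $ i) \<and> (\<forall>j. 0 \<le> y $ j) \<and>
     (\<exists>t :: nat \<Rightarrow> ereal. (\<forall>k\<in>{1..l}. t k \<noteq> -\<infinity>) \<and>
        (\<forall>i. (MIN k\<in>{1..l}. t k + ereal (X k $ i)) \<le> ereal (x $ i)) \<and>
        (\<forall>j. ereal (y $ j) \<le> (MIN k\<in>{1..l}. t k + ereal (Y k $ j))))}"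

definition natpts :: "((real^'m) \<times> (real^'n)) set" where
  "natpts = {(x, y). (\<forall>i. x $ i \<in> \<nat>) \<and> (\<forall>j. y $ j \<in> \<nat>)}"

definition ZV :: "nat \<Rightarrow> (nat \<Rightarrow> real^'m) \<Rightarrow> (nat \<Rightarrow> real^'n) \<Rightarrow> ((real^'m) \<times> (real^'n)) set" where
  "ZV l X Y = TV l X Y \<inter> natpts"

definition ZC :: "nat \<Rightarrow> (nat \<Rightarrow> real^'m) \<Rightarrow> (nat \<Rightarrow> real^'n) \<Rightarrow> ((real^'m) \<times> (real^'n)) set" where
  "ZC l X Y = TC l X Y \<inter> natpts"

definition Din :: "real^'m \<Rightarrow> real^'n \<Rightarrow> ((real^'m) \<times> (real^'n)) set \<Rightarrow> ereal" where
  "Din x y T = Sup (ereal ` {\<delta>. (x - \<delta> *\<^sub>R (\<chi> i. 1), y) \<in> T})"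

definition Dout :: "real^'m \<Rightarrow> real^'n \<Rightarrow> ((real^'m) \<times> (real^'n)) set \<Rightarrow> ereal" where
  "Dout x y T = Sup (ereal ` {\<delta>. (x, y + \<delta> *\<^sub>R (\<chi> j. 1)) \<in> T})"

end

theory Submission
  imports Defs
begin

definition rf :: "ereal \<Rightarrow> ereal" where
  "rf t = (case t of ereal r \<Rightarrow> ereal (of_int \<lfloor>r\<rfloor>) | _ \<Rightarrow> t)"
definition rc :: "ereal \<Rightarrow> ereal" where
  "rc t = (case t of ereal r \<Rightarrow> ereal (of_int \<lceil>r\<rceil>) | _ \<Rightarrow> t)"

lemma rf_x:
  assumes "t \<noteq> -\<infinity>" "a \<in> \<int>" "b \<in> \<int>" "t + ereal a \<le> ereal (b - \<delta>)"
  shows "rf t + ereal a \<le> ereal (b - of_int \<lceil>\<delta>\<rceil>)"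
proof -
  obtain a' b' where ab: "a = of_int a'" "b = of_int b'" using assms(2,3) by (auto elim!: Ints_cases)
  show ?thesis
  proof (cases t)
    case (real r)
    then have "r \<le> b - a - \<delta>" using assms(4) by simp
    then have "\<lfloor>r\<rfloor> \<le> b' - a' - \<lceil>\<delta>\<rceil>" using ab by linarith
    then show ?thesis using real ab by (simp add: rf_def)
  qed (use assms in auto)
qed

lemma rf_y:
  assumes "t \<noteq> -\<infinity>" "a \<in> \<int>" "b \<in> \<int>" "ereal b \<le> t + ereal a"
  shows "ereal b \<le> rf t + ereal a"
proof -
  obtain a' b' where ab: "a = of_int a'" "b = of_int b'" using assms(2,3) by (auto elim!: Ints_cases)
  show ?thesis
  proof (cases t)
    case (real r)
    then have "b - a \<le> r" using assms(4) by simp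
    then have "b' - a' \<le> \<lfloor>r\<rfloor>" using ab by linarith
    then show ?thesis using real ab by (simp add: rf_def)
  qed (use assms in \<open>auto simp: rf_def\<close>)
qed

lemma rf_simps: "0 \<le> t \<Longrightarrow> 0 \<le> rf t" "rf 0 = 0" "t \<noteq> -\<infinity> \<Longrightarrow> rf t \<noteq> -\<infinity>"
  by (cases t; auto simp: rf_def zero_ereal_def)+

lemma rc_x:
  assumes "t \<noteq> -\<infinity>" "a \<in> \<int>" "b \<in> \<int>" "t + ereal a \<le> ereal b"
  shows "rc t + ereal a \<le> ereal b"
proof -
  obtain a' b' where ab: "a = of_int a'" "b = of_int b'" using assms(2,3) by (auto elim!: Ints_cases)
  show ?thesis
  proof (cases t)
    case (real r)
    then have "r \<le> b - a" using assms(4) by simp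
    then have "\<lceil>r\<rceil> \<le> b' - a'" using ab by linarith
    then show ?thesis using real ab by (simp add: rc_def)
  qed (use assms in auto)
qed

lemma rc_y:
  assumes "t \<noteq> -\<infinity>" "a \<in> \<int>" "b \<in> \<int>" "ereal (b + \<delta>) \<le> t + ereal a"
  shows "ereal (b + of_int \<lceil>\<delta>\<rceil>) \<le> rc t + ereal a"
proof -
  obtain a' b' where ab: "a = of_int a'" "b = of_int b'" using assms(2,3) by (auto elim!: Ints_cases)
  show ?thesis
  proof (cases t)
    case (real r)
    then have "b + \<delta> \<le> r + a" using assms(4) by simp
    then have "b' + \<lceil>\<delta>\<rceil> \<le> \<lceil>r\<rceil> + a'" using ab by linarith
    then show ?thesis using real ab by (simp add: rc_def)
  qed (use assms in \<open>auto simp: rc_def\<close>)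
qed

lemma rc_simps: "0 \<le> t \<Longrightarrow> 0 \<le> rc t" "rc 0 = 0" "t \<noteq> -\<infinity> \<Longrightarrow> rc t \<noteq> -\<infinity>"
  by (cases t; auto simp: rc_def zero_ereal_def)+

lemma Int_nonneg_Nats: "(x::real) \<in> \<int> \<Longrightarrow> 0 \<le> x \<Longrightarrow> x \<in> \<nat>"
  proof -
  assume "x \<in> \<int>" "0 \<le> x"
  then obtain k where k: "x = of_int k" "0 \<le> k" by (auto elim!: Ints_cases)
  then have "x = of_nat (nat k)" by simp
  then show ?thesis by (simp add: Nats_def)
qed

lemma MIN_eq0:
  fixes t :: "nat \<Rightarrow> ereal"
  assumes "finite A" "A \<noteq> {}"
  shows "(MIN k\<in>A. t k) = 0 \<longleftrightarrow> (\<forall>k\<in>A. 0 \<le> t k) \<and> (\<exists>k\<in>A. t k = 0)"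
proof
  assume h: "(MIN k\<in>A. t k) = 0"
  then have "\<forall>k\<in>A. 0 \<le> t k" using assms by (metis Min_le finite_imageI image_eqI)
  moreover have "(MIN k\<in>A. t k) \<in> t ` A" using assms by simp
  ultimately show "(\<forall>k\<in>A. 0 \<le> t k) \<and> (\<exists>k\<in>A. t k = 0)" using h by auto
next
  assume "(\<forall>k\<in>A. 0 \<le> t k) \<and> (\<exists>k\<in>A. t k = 0)"
  then show "(MIN k\<in>A. t k) = 0" using assms
    by (intro antisym) (auto simp: Min_le_iff Min_ge_iff, force)
qed

lemma TV_iff:
  assumes "l \<ge> 1"
  shows "(x,y) \<in> TV l X Y \<longleftrightarrow> (\<forall>i. 0 \<le> x$i) \<and> (\<forall>j. 0 \<le> y$j) \<and> (\<exists>t. (\<forall>k\<in>{1..l}. t k \<noteq> -\<infinity>) \<and>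
     (\<forall>i. \<exists>k\<in>{1..l}. t k + ereal (X k $ i) \<le> ereal (x$i)) \<and>
     (\<forall>j. \<forall>k\<in>{1..l}. ereal (y$j) \<le> t k + ereal (Y k $ j)) \<and> (\<forall>k\<in>{1..l}. 0 \<le> t k) \<and> (\<exists>k\<in>{1..l}. t k = 0))"
  using assms by (simp add: TV_def Min_le_iff Min_ge_iff MIN_eq0)

lemma TC_iff:
  assumes "l \<ge> 1"
  shows "(x,y) \<in> TC l X Y \<longleftrightarrow> (\<forall>i. 0 \<le> x$i) \<and> (\<forall>j. 0 \<le> y$j) \<and> (\<exists>t. (\<forall>k\<in>{1..l}. t k \<noteq> -\<infinity>) \<and>
     (\<forall>i. \<exists>k\<in>{1..l}. t k + ereal (X k $ i) \<le> ereal (x$i)) \<and>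
     (\<forall>j. \<forall>k\<in>{1..l}. ereal (y$j) \<le> t k + ereal (Y k $ j)))"
  using assms by (simp add: TC_def Min_le_iff Min_ge_iff)

lemma sup_eq:
  assumes "S' \<subseteq> S" "\<And>d. d \<in> S \<Longrightarrow> \<exists>d'\<in>S'. d \<le> d'"
  shows "Sup (ereal ` S) = Sup (ereal ` (S'::real set))"
proof (rule antisym)
  show "Sup (ereal ` S) \<le> Sup (ereal ` S')"
  proof (rule Sup_least)
    fix z assume "z \<in> ereal ` S"
    then obtain d where d: "d \<in> S" "z = ereal d" by auto
    then obtain d' where "d' \<in> S'" "d \<le> d'" using assms(2) by blast
    then show "z \<le> Sup (ereal ` S')" using d by (meson Sup_upper2 ereal_less_eq(3) imageI)
  qed
  show "Sup (ereal ` S') \<le> Sup (ereal ` S)" using assms(1) by (intro Sup_subset_mono) auto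
qed


lemma din_T:
  assumes hX: "\<forall>k\<in>{1..l}. \<forall>i. X k $ i \<in> \<nat>"
    and hY: "\<forall>k\<in>{1..l}. \<forall>j. Y k $ j \<in> \<nat>"
    and kb: "kb \<in> {1..l}"
  shows "Din (X kb) (Y kb) (TV l X Y) = Din (X kb) (Y kb) (ZV l X Y)"
        "Din (X kb) (Y kb) (TC l X Y) = Din (X kb) (Y kb) (ZC l X Y)"
proof -
  have l: "l \<ge> 1" using kb by auto
  have XI: "X k $ i \<in> \<int>" if "k \<in> {1..l}" for k i using hX that Nats_subset_Ints by blast
  have YI: "Y k $ j \<in> \<int>" if "k \<in> {1..l}" for k j using hY that Nats_subset_Ints by blast
  have XbN: "X kb $ i \<in> \<nat>" for i using hX kb by blast
  have YbN: "Y kb $ j \<in> \<nat>" for j using hY kb by blast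
  have nat: "(X kb - of_int \<lceil>d\<rceil> *\<^sub>R (\<chi> i. 1), Y kb) \<in> natpts" if "\<forall>i. 0 \<le> X kb $ i - d" for d
  proof -
    have "X kb $ i - of_int \<lceil>d\<rceil> \<in> \<nat>" for i
    proof (rule Int_nonneg_Nats)
      show "X kb $ i - of_int \<lceil>d\<rceil> \<in> \<int>" using XI[OF kb] by simp
      have "X kb $ i \<in> \<int>" using XI[OF kb] .
      then obtain z where z: "X kb $ i = of_int z" by (auto elim!: Ints_cases)
      then have "d \<le> of_int z" using that[rule_format, of i] by linarith
      then have "\<lceil>d\<rceil> \<le> z" by (simp add: ceiling_le_iff)
      then show "0 \<le> X kb $ i - of_int \<lceil>d\<rceil>" using z by simp
    qed
    then show ?thesis using YbN by (simp add: natpts_def)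
  qed
  have cnn: "0 \<le> X kb $ i - of_int \<lceil>d\<rceil>" if "\<forall>i. 0 \<le> X kb $ i - d" for d i
  proof -
    have "X kb $ i \<in> \<int>" using XI[OF kb] .
    then obtain z where z: "X kb $ i = of_int z" by (auto elim!: Ints_cases)
    then have "d \<le> of_int z" using that[rule_format, of i] by linarith
    then have "\<lceil>d\<rceil> \<le> z" by (simp add: ceiling_le_iff)
    then show ?thesis using z by simp
  qed
  show "Din (X kb) (Y kb) (TV l X Y) = Din (X kb) (Y kb) (ZV l X Y)"
    unfolding Din_def
  proof (rule sup_eq)
    show "{\<delta>. (X kb - \<delta> *\<^sub>R (\<chi> i. 1), Y kb) \<in> ZV l X Y} \<subseteq> {\<delta>. (X kb - \<delta> *\<^sub>R (\<chi> i. 1), Y kb) \<in> TV l X Y}"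
      by (auto simp: ZV_def)
    fix d assume "d \<in> {\<delta>. (X kb - \<delta> *\<^sub>R (\<chi> i. 1), Y kb) \<in> TV l X Y}"
    then have "(X kb - d *\<^sub>R (\<chi> i. 1), Y kb) \<in> TV l X Y" by simp
    then obtain t where nn: "\<forall>i. 0 \<le> X kb $ i - d" and
      t1: "\<forall>k\<in>{1..l}. t k \<noteq> -\<infinity>" and
      t2: "\<forall>i. \<exists>k\<in>{1..l}. t k + ereal (X k $ i) \<le> ereal (X kb $ i - d)" and
      t3: "\<forall>j. \<forall>k\<in>{1..l}. ereal (Y kb $ j) \<le> t k + ereal (Y k $ j)" and
      t4: "\<forall>k\<in>{1..l}. 0 \<le> t k" and t5: "\<exists>k\<in>{1..l}. t k = 0"
      unfolding TV_iff[OF l] by auto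
    have "(X kb - of_int \<lceil>d\<rceil> *\<^sub>R (\<chi> i. 1), Y kb) \<in> TV l X Y"
      unfolding TV_iff[OF l]
    proof (intro conjI exI[of _ "\<lambda>k. rf (t k)"])
      show "\<forall>i. 0 \<le> (X kb - of_int \<lceil>d\<rceil> *\<^sub>R (\<chi> i. 1)) $ i" using cnn[OF nn] by simp
      show "\<forall>j. 0 \<le> Y kb $ j" using YbN by (metis Nats_cases of_nat_0_le_iff)
      show "\<forall>k\<in>{1..l}. rf (t k) \<noteq> - \<infinity>" using t1 rf_simps by blast
      show "\<forall>i. \<exists>k\<in>{1..l}. rf (t k) + ereal (X k $ i) \<le> ereal ((X kb - of_int \<lceil>d\<rceil> *\<^sub>R (\<chi> i. 1)) $ i)"
      proof
        fix i obtain k where k: "k \<in> {1..l}" "t k + ereal (X k $ i) \<le> ereal (X kb $ i - d)" using t2 by blast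
        then show "\<exists>k\<in>{1..l}. rf (t k) + ereal (X k $ i) \<le> ereal ((X kb - of_int \<lceil>d\<rceil> *\<^sub>R (\<chi> i. 1)) $ i)"
          using rf_x[OF _ XI[OF k(1), of i] XI[OF kb, of i], of "t k" d] t1 by auto
      qed
      show "\<forall>j. \<forall>k\<in>{1..l}. ereal (Y kb $ j) \<le> rf (t k) + ereal (Y k $ j)"
        using rf_y[OF _ YI YI[OF kb]] t1 t3 by blast
      show "\<forall>k\<in>{1..l}. 0 \<le> rf (t k)" using t4 rf_simps by blast
      show "\<exists>k\<in>{1..l}. rf (t k) = 0" using t5 rf_simps by metis
    qed
    moreover have "(X kb - of_int \<lceil>d\<rceil> *\<^sub>R (\<chi> i. 1), Y kb) \<in> natpts" using nat[OF nn] .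
    ultimately show "\<exists>d'\<in>{\<delta>. (X kb - \<delta> *\<^sub>R (\<chi> i. 1), Y kb) \<in> ZV l X Y}. d \<le> d'"
      by (intro bexI[of _ "of_int \<lceil>d\<rceil>"]) (auto simp: ZV_def)
  qed
  show "Din (X kb) (Y kb) (TC l X Y) = Din (X kb) (Y kb) (ZC l X Y)"
    unfolding Din_def
  proof (rule sup_eq)
    show "{\<delta>. (X kb - \<delta> *\<^sub>R (\<chi> i. 1), Y kb) \<in> ZC l X Y} \<subseteq> {\<delta>. (X kb - \<delta> *\<^sub>R (\<chi> i. 1), Y kb) \<in> TC l X Y}"
      by (auto simp: ZC_def)
    fix d assume "d \<in> {\<delta>. (X kb - \<delta> *\<^sub>R (\<chi> i. 1), Y kb) \<in> TC l X Y}"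
    then have "(X kb - d *\<^sub>R (\<chi> i. 1), Y kb) \<in> TC l X Y" by simp
    then obtain t where nn: "\<forall>i. 0 \<le> X kb $ i - d" and
      t1: "\<forall>k\<in>{1..l}. t k \<noteq> -\<infinity>" and
      t2: "\<forall>i. \<exists>k\<in>{1..l}. t k + ereal (X k $ i) \<le> ereal (X kb $ i - d)" and
      t3: "\<forall>j. \<forall>k\<in>{1..l}. ereal (Y kb $ j) \<le> t k + ereal (Y k $ j)"
      unfolding TC_iff[OF l] by auto
    have "(X kb - of_int \<lceil>d\<rceil> *\<^sub>R (\<chi> i. 1), Y kb) \<in> TC l X Y"
      unfolding TC_iff[OF l]
    proof (intro conjI exI[of _ "\<lambda>k. rf (t k)"])
      show "\<forall>i. 0 \<le> (X kb - of_int \<lceil>d\<rceil> *\<^sub>R (\<chi> i. 1)) $ i" using cnn[OF nn] by simp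
      show "\<forall>j. 0 \<le> Y kb $ j" using YbN by (metis Nats_cases of_nat_0_le_iff)
      show "\<forall>k\<in>{1..l}. rf (t k) \<noteq> - \<infinity>" using t1 rf_simps by blast
      show "\<forall>i. \<exists>k\<in>{1..l}. rf (t k) + ereal (X k $ i) \<le> ereal ((X kb - of_int \<lceil>d\<rceil> *\<^sub>R (\<chi> i. 1)) $ i)"
      proof
        fix i obtain k where k: "k \<in> {1..l}" "t k + ereal (X k $ i) \<le> ereal (X kb $ i - d)" using t2 by blast
        then show "\<exists>k\<in>{1..l}. rf (t k) + ereal (X k $ i) \<le> ereal ((X kb - of_int \<lceil>d\<rceil> *\<^sub>R (\<chi> i. 1)) $ i)"
          using rf_x[OF _ XI[OF k(1), of i] XI[OF kb, of i], of "t k" d] t1 by auto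
      qed
      show "\<forall>j. \<forall>k\<in>{1..l}. ereal (Y kb $ j) \<le> rf (t k) + ereal (Y k $ j)"
        using rf_y[OF _ YI YI[OF kb]] t1 t3 by blast
    qed
    moreover have "(X kb - of_int \<lceil>d\<rceil> *\<^sub>R (\<chi> i. 1), Y kb) \<in> natpts" using nat[OF nn] .
    ultimately show "\<exists>d'\<in>{\<delta>. (X kb - \<delta> *\<^sub>R (\<chi> i. 1), Y kb) \<in> ZC l X Y}. d \<le> d'"
      by (intro bexI[of _ "of_int \<lceil>d\<rceil>"]) (auto simp: ZC_def)
  qed
qed


lemma dout_T:
  assumes hX: "\<forall>k\<in>{1..l}. \<forall>i. X k $ i \<in> \<nat>"
    and hY: "\<forall>k\<in>{1..l}. \<forall>j. Y k $ j \<in> \<nat>"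
    and kb: "kb \<in> {1..l}"
  shows "Dout (X kb) (Y kb) (TV l X Y) = Dout (X kb) (Y kb) (ZV l X Y)"
        "Dout (X kb) (Y kb) (TC l X Y) = Dout (X kb) (Y kb) (ZC l X Y)"
proof -
  have l: "l \<ge> 1" using kb by auto
  have XI: "X k $ i \<in> \<int>" if "k \<in> {1..l}" for k i using hX that Nats_subset_Ints by blast
  have YI: "Y k $ j \<in> \<int>" if "k \<in> {1..l}" for k j using hY that Nats_subset_Ints by blast
  have XbN: "X kb $ i \<in> \<nat>" for i using hX kb by blast
  have cnn: "0 \<le> Y kb $ j + of_int \<lceil>d\<rceil>" if "\<forall>j. 0 \<le> Y kb $ j + d" for d j
  proof -
    have "0 \<le> Y kb $ j + d" using that by blast
    moreover have "d \<le> of_int \<lceil>d\<rceil>" by simp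
    ultimately show ?thesis by linarith
  qed
  have nat: "(X kb, Y kb + of_int \<lceil>d\<rceil> *\<^sub>R (\<chi> j. 1)) \<in> natpts" if "\<forall>j. 0 \<le> Y kb $ j + d" for d
  proof -
    have "Y kb $ j + of_int \<lceil>d\<rceil> \<in> \<nat>" for j
      by (rule Int_nonneg_Nats) (use YI[OF kb, of j] cnn[OF that, of j] in auto)
    then show ?thesis using XbN by (simp add: natpts_def)
  qed

  show "Dout (X kb) (Y kb) (TV l X Y) = Dout (X kb) (Y kb) (ZV l X Y)"
    unfolding Dout_def
  proof (rule sup_eq)
    show "{\<delta>. (X kb, Y kb + \<delta> *\<^sub>R (\<chi> j. 1)) \<in> ZV l X Y} \<subseteq> {\<delta>. (X kb, Y kb + \<delta> *\<^sub>R (\<chi> j. 1)) \<in> TV l X Y}"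
      by (auto simp: ZV_def)
    fix d assume "d \<in> {\<delta>. (X kb, Y kb + \<delta> *\<^sub>R (\<chi> j. 1)) \<in> TV l X Y}"
    then have "(X kb, Y kb + d *\<^sub>R (\<chi> j. 1)) \<in> TV l X Y" by simp
    then obtain t where nn: "\<forall>j. 0 \<le> Y kb $ j + d" and
      t1: "\<forall>k\<in>{1..l}. t k \<noteq> -\<infinity>" and
      t2: "\<forall>i. \<exists>k\<in>{1..l}. t k + ereal (X k $ i) \<le> ereal (X kb $ i)" and
      t3: "\<forall>j. \<forall>k\<in>{1..l}. ereal (Y kb $ j + d) \<le> t k + ereal (Y k $ j)" and
      t4: "\<forall>k\<in>{1..l}. 0 \<le> t k" and t5: "\<exists>k\<in>{1..l}. t k = 0"
      unfolding TV_iff[OF l] by auto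
    have "(X kb, Y kb + of_int \<lceil>d\<rceil> *\<^sub>R (\<chi> j. 1)) \<in> TV l X Y"
      unfolding TV_iff[OF l]
    proof (intro conjI exI[of _ "\<lambda>k. rc (t k)"])
      show "\<forall>j. 0 \<le> (Y kb + of_int \<lceil>d\<rceil> *\<^sub>R (\<chi> j. 1)) $ j" using cnn[OF nn] by simp
      show "\<forall>i. 0 \<le> X kb $ i" using XbN by (metis Nats_cases of_nat_0_le_iff)
      show "\<forall>k\<in>{1..l}. rc (t k) \<noteq> - \<infinity>" using t1 rc_simps by blast
      show "\<forall>i. \<exists>k\<in>{1..l}. rc (t k) + ereal (X k $ i) \<le> ereal (X kb $ i)"
      proof
        fix i obtain k where k: "k \<in> {1..l}" "t k + ereal (X k $ i) \<le> ereal (X kb $ i)" using t2 by blast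
        then show "\<exists>k\<in>{1..l}. rc (t k) + ereal (X k $ i) \<le> ereal (X kb $ i)"
          using rc_x[OF _ XI[OF k(1), of i] XI[OF kb, of i], of "t k"] t1 by auto
      qed
      show "\<forall>j. \<forall>k\<in>{1..l}. ereal ((Y kb + of_int \<lceil>d\<rceil> *\<^sub>R (\<chi> j. 1)) $ j) \<le> rc (t k) + ereal (Y k $ j)"
      proof (intro allI ballI)
        fix j k assume k: "k \<in> {1..l}"
        show "ereal ((Y kb + of_int \<lceil>d\<rceil> *\<^sub>R (\<chi> j. 1)) $ j) \<le> rc (t k) + ereal (Y k $ j)"
          using rc_y[OF _ YI[OF k, of j] YI[OF kb, of j], of "t k" d] t1 t3 k by auto
      qed
      show "\<forall>k\<in>{1..l}. 0 \<le> rc (t k)" using t4 rc_simps by blast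
      show "\<exists>k\<in>{1..l}. rc (t k) = 0" using t5 rc_simps by metis
    qed
    moreover have "(X kb, Y kb + of_int \<lceil>d\<rceil> *\<^sub>R (\<chi> j. 1)) \<in> natpts" using nat[OF nn] .
    ultimately show "\<exists>d'\<in>{\<delta>. (X kb, Y kb + \<delta> *\<^sub>R (\<chi> j. 1)) \<in> ZV l X Y}. d \<le> d'"
      by (intro bexI[of _ "of_int \<lceil>d\<rceil>"]) (auto simp: ZV_def)
  qed

  show "Dout (X kb) (Y kb) (TC l X Y) = Dout (X kb) (Y kb) (ZC l X Y)"
    unfolding Dout_def
  proof (rule sup_eq)
    show "{\<delta>. (X kb, Y kb + \<delta> *\<^sub>R (\<chi> j. 1)) \<in> ZC l X Y} \<subseteq> {\<delta>. (X kb, Y kb + \<delta> *\<^sub>R (\<chi> j. 1)) \<in> TC l X Y}"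
      by (auto simp: ZC_def)
    fix d assume "d \<in> {\<delta>. (X kb, Y kb + \<delta> *\<^sub>R (\<chi> j. 1)) \<in> TC l X Y}"
    then have "(X kb, Y kb + d *\<^sub>R (\<chi> j. 1)) \<in> TC l X Y" by simp
    then obtain t where nn: "\<forall>j. 0 \<le> Y kb $ j + d" and
      t1: "\<forall>k\<in>{1..l}. t k \<noteq> -\<infinity>" and
      t2: "\<forall>i. \<exists>k\<in>{1..l}. t k + ereal (X k $ i) \<le> ereal (X kb $ i)" and
      t3: "\<forall>j. \<forall>k\<in>{1..l}. ereal (Y kb $ j + d) \<le> t k + ereal (Y k $ j)" 
      unfolding TC_iff[OF l] by auto
    have "(X kb, Y kb + of_int \<lceil>d\<rceil> *\<^sub>R (\<chi> j. 1)) \<in> TC l X Y"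
      unfolding TC_iff[OF l]
    proof (intro conjI exI[of _ "\<lambda>k. rc (t k)"])
      show "\<forall>j. 0 \<le> (Y kb + of_int \<lceil>d\<rceil> *\<^sub>R (\<chi> j. 1)) $ j" using cnn[OF nn] by simp
      show "\<forall>i. 0 \<le> X kb $ i" using XbN by (metis Nats_cases of_nat_0_le_iff)
      show "\<forall>k\<in>{1..l}. rc (t k) \<noteq> - \<infinity>" using t1 rc_simps by blast
      show "\<forall>i. \<exists>k\<in>{1..l}. rc (t k) + ereal (X k $ i) \<le> ereal (X kb $ i)"
      proof
        fix i obtain k where k: "k \<in> {1..l}" "t k + ereal (X k $ i) \<le> ereal (X kb $ i)" using t2 by blast
        then show "\<exists>k\<in>{1..l}. rc (t k) + ereal (X k $ i) \<le> ereal (X kb $ i)"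
          using rc_x[OF _ XI[OF k(1), of i] XI[OF kb, of i], of "t k"] t1 by auto
      qed
      show "\<forall>j. \<forall>k\<in>{1..l}. ereal ((Y kb + of_int \<lceil>d\<rceil> *\<^sub>R (\<chi> j. 1)) $ j) \<le> rc (t k) + ereal (Y k $ j)"
      proof (intro allI ballI)
        fix j k assume k: "k \<in> {1..l}"
        show "ereal ((Y kb + of_int \<lceil>d\<rceil> *\<^sub>R (\<chi> j. 1)) $ j) \<le> rc (t k) + ereal (Y k $ j)"
          using rc_y[OF _ YI[OF k, of j] YI[OF kb, of j], of "t k" d] t1 t3 k by auto
      qed
    qed
    moreover have "(X kb, Y kb + of_int \<lceil>d\<rceil> *\<^sub>R (\<chi> j. 1)) \<in> natpts" using nat[OF nn] .
    ultimately show "\<exists>d'\<in>{\<delta>. (X kb, Y kb + \<delta> *\<^sub>R (\<chi> j. 1)) \<in> ZC l X Y}. d \<le> d'"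
      by (intro bexI[of _ "of_int \<lceil>d\<rceil>"]) (auto simp: ZC_def)
  qed
qed

theorem mainTheorem8:
  fixes l :: nat and X :: "nat \<Rightarrow> real^'m" and Y :: "nat \<Rightarrow> real^'n" and kb :: nat
  assumes "\<forall>k\<in>{1..l}. \<forall>i. X k $ i \<in> \<nat>"
    and "\<forall>k\<in>{1..l}. \<forall>j. Y k $ j \<in> \<nat>"
    and "kb \<in> {1..l}"
  shows "Din (X kb) (Y kb) (TV l X Y) = Din (X kb) (Y kb) (ZV l X Y) \<and>
         Din (X kb) (Y kb) (TC l X Y) = Din (X kb) (Y kb) (ZC l X Y) \<and>
         Dout (X kb) (Y kb) (TV l X Y) = Dout (X kb) (Y kb) (ZV l X Y) \<and>
         Dout (X kb) (Y kb) (TC l X Y) = Dout (X kb) (Y kb) (ZC l X Y)"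
  using din_T[OF assms] dout_T[OF assms] by simp

end
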